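(* For every positive integer $\gamma$ there exist infinitely many finite groups $G$ (pairwise non-isomorphic) having exactly $d(|G|)+\gamma$ cyclic subgroups; for instance, for every integer $u\ge1$, the group $G=C_3\rtimes C_{2^u 5^{\gamma-1}}$, where a generator of $C_{2^u5^{\gamma-1}}$ acts on $C_3$ by inversion, has this property.
   Context: $C_k$ denotes the cyclic group of order $k$; $d(k)$ denotes the number of positive divisors of $k$. *)

theory Defs
  imports "HOL-Algebra.Algebra"
begin

definition num_divisors :: "nat \<Rightarrow> nat" where
  "num_divisors k = card {m. 0 < m \<and> m dvd k}"

definition cyclic_subgroups :: "('a, 'b) monoid_scheme \<Rightarrow> 'a set set" where
  "cyclic_subgroups G = {H. \<exists>g \<in> carrier G. H = generate G {g}}"

text \<open>The semidirect product C_3 \<rtimes> C_n, where a generator of C_n acts on C_3 by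
  inversion (well defined as a group when n is even).\<close>
definition C3_sdp :: "nat \<Rightarrow> (int \<times> int) monoid" where
  "C3_sdp n = \<lparr> carrier = {0..<3} \<times> {0..<int n},
      monoid.mult = (\<lambda>(a, b) (c, d). ((a + (if even b then c else - c)) mod 3, (b + d) mod int n)),
      monoid.one = (0, 0) \<rparr>"

end

theory Submission
  imports Defs
begin

lemma even_mod_evenN: "even (N::int) \<Longrightarrow> even (x mod N) = even x"
  by (metis dvd_mod_iff even_mod_2_iff mod_mod_cancel)

lemma C3_mult: "(a,b) \<otimes>\<^bsub>C3_sdp n\<^esub> (c,d) = ((a + (if even b then c else - c)) mod 3, (b + d) mod int n)"
  by (simp add: C3_sdp_def)

lemma C3_one: "\<one>\<^bsub>C3_sdp n\<^esub> = (0,0)" by (simp add: C3_sdp_def)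
lemma C3_carrier: "carrier (C3_sdp n) = {0..<3} \<times> {0..<int n}" by (simp add: C3_sdp_def)

lemma C3_group: assumes "even n" "n > 0" shows "group (C3_sdp n)"
proof (rule groupI)
  have eN: "even (int n)" using assms by simp
  fix x y z assume "x \<in> carrier (C3_sdp n)" "y \<in> carrier (C3_sdp n)" "z \<in> carrier (C3_sdp n)"
  then obtain a b c d e f where xyz: "x = (a,b)" "y = (c,d)" "z = (e,f)" by (cases x, cases y, cases z) auto
  have p1: "even ((b + d) mod int n) = even (b+d)" "even ((d + f) mod int n) = even (d+f)"
    using even_mod_evenN[OF eN] by auto
  show "x \<otimes>\<^bsub>C3_sdp n\<^esub> y \<otimes>\<^bsub>C3_sdp n\<^esub> z = x \<otimes>\<^bsub>C3_sdp n\<^esub> (y \<otimes>\<^bsub>C3_sdp n\<^esub> z)"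
    unfolding xyz C3_mult p1
    by (cases "even b"; cases "even d"; simp add: mod_simps algebra_simps)
next
  fix x y assume "x \<in> carrier (C3_sdp n)" "y \<in> carrier (C3_sdp n)"
  then show "x \<otimes>\<^bsub>C3_sdp n\<^esub> y \<in> carrier (C3_sdp n)"
    using assms by (cases x, cases y) (auto simp: C3_mult C3_carrier)
next
  show "\<one>\<^bsub>C3_sdp n\<^esub> \<in> carrier (C3_sdp n)" using assms by (simp add: C3_one C3_carrier)
next
  fix x assume "x \<in> carrier (C3_sdp n)"
  then show "\<one>\<^bsub>C3_sdp n\<^esub> \<otimes>\<^bsub>C3_sdp n\<^esub> x = x"
    by (cases x) (auto simp: C3_mult C3_one C3_carrier)
next
  have eN: "even (int n)" using assms by simp
  fix x assume "x \<in> carrier (C3_sdp n)"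
  then obtain a b where x: "x = (a,b)" "a \<in> {0..<3}" "b \<in> {0..<int n}" by (cases x) (auto simp: C3_carrier)
  have p: "even ((- b) mod int n) = even b" using even_mod_evenN[OF eN] by simp
  show "\<exists>y\<in>carrier (C3_sdp n). y \<otimes>\<^bsub>C3_sdp n\<^esub> x = \<one>\<^bsub>C3_sdp n\<^esub>"
    apply (rule bexI[of _ "((if even b then - a else a) mod 3, (- b) mod int n)"])
    using x assms p by (auto simp: C3_mult C3_one C3_carrier mod_simps)
qed
lemma C3_pow: assumes "even n" "n > 0" "a \<in> {0..<3}" "b \<in> {0..<int n}"
  shows "(a,b) [^]\<^bsub>C3_sdp n\<^esub> (k::nat) = (if even b then ((int k * a) mod 3, (int k * b) mod int n)
            else ((if odd k then a else 0), (int k * b) mod int n))"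
proof (induction k)
  case 0 then show ?case by (simp add: C3_one)
next
  case (Suc k)
  have eN: "even (int n)" using assms by simp
  have p: "even ((int k * b) mod int n) = (even k \<or> even b)" using even_mod_evenN[OF eN] by simp
  show ?case using Suc assms p
    by (cases "even b"; cases "even k"; simp add: C3_mult mod_simps algebra_simps)
qed
lemma L1: assumes "(N::int) > 0"
  shows "{(int k * b) mod N | k::nat. True} = {y \<in> {0..<N}. gcd b N dvd y}"
proof
  show "{(int k * b) mod N | k::nat. True} \<subseteq> {y \<in> {0..<N}. gcd b N dvd y}"
    using assms by (auto intro!: dvd_mod)
next
  show "{y \<in> {0..<N}. gcd b N dvd y} \<subseteq> {(int k * b) mod N | k::nat. True}"
  proof
    fix y assume y: "y \<in> {y \<in> {0..<N}. gcd b N dvd y}"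
    then obtain t where t: "y = gcd b N * t" by auto
    obtain u v where uv: "u * b + v * N = gcd b N" using bezout_int by blast
    define k where "k = nat ((u*t) mod N)"
    have ik: "int k = (u*t) mod N" using assms by (simp add: k_def)
    have "(int k * b) mod N = (u * t * b) mod N" unfolding ik by (simp add: mod_simps)
    also have "u * t * b = t * gcd b N - (t * v) * N" using uv by (simp add: algebra_simps flip: uv)
    also have "(t * gcd b N - (t * v) * N) mod N = ((t * gcd b N) mod N - ((t * v) * N) mod N) mod N" by (simp only: mod_diff_eq)
    also have "\<dots> = (t * gcd b N) mod N" by simp
    also have "\<dots> = y" using y t by (simp add: mult.commute)
    finally show "y \<in> {(int k * b) mod N | k::nat. True}" by blast
  qed
qed
definition Bs :: "nat \<Rightarrow> nat \<Rightarrow> int set" where "Bs n d = {y \<in> {0..<int n}. int d dvd y}"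
definition TB :: "nat \<Rightarrow> int \<Rightarrow> nat \<Rightarrow> (int \<times> int) set" where
  "TB n a d = (\<lambda>y. (if odd y then a else 0, y)) ` Bs n d"
definition Aset :: "int \<Rightarrow> int set" where "Aset a = (if a = 0 then {0} else {0..<3})"

lemma mod3_small: "(a::int) \<in> {1,2} \<Longrightarrow> x \<in> {0,1,2} \<Longrightarrow> r \<in> {0,1,2} \<Longrightarrow> s \<in> {1,2} \<Longrightarrow>
   ((r + s * (((x*a - r)*s) mod 3)) * a) mod 3 = x"
  by auto

lemma red3: "((K + N * J) * a) mod 3 = ((K mod 3 + (N mod 3) * J) * a) mod (3::int)"
proof -
  have e: "(K + N*J)*a - (K mod 3 + (N mod 3)*J)*a = ((K - K mod 3) + (N - N mod 3)*J)*a"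
    by (simp add: algebra_simps)
  have "(3::int) dvd ((K - K mod 3) + (N - N mod 3)*J)*a"
    by (intro dvd_mult2 dvd_add dvd_mult2 dvd_minus_mod)
  then show ?thesis unfolding mod_eq_dvd_iff e .
qed

lemma mod3: assumes "(a::int) \<in> {1,2}" "x \<in> {0,1,2}" "N mod 3 \<noteq> 0"
  shows "((K + N * (((x*a - K)*N) mod 3)) * a) mod 3 = x"
proof -
  have "((x*a - K mod 3)*(N mod 3)) mod 3 = ((x*a - K mod 3)*N) mod 3"
    by (simp only: mod_mult_right_eq)
  also have "\<dots> = (((x*a - K mod 3) mod 3)*N) mod 3"
    by (simp only: mod_mult_left_eq)
  also have "\<dots> = (((x*a - K) mod 3)*N) mod 3"
    by (simp only: mod_diff_right_eq)
  also have "\<dots> = ((x*a - K)*N) mod 3"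
    by (simp only: mod_mult_left_eq)
  finally have j: "((x*a - K)*N) mod 3 = ((x*a - K mod 3)*(N mod 3)) mod 3" by simp
  have "((K + N * (((x*a - K)*N) mod 3)) * a) mod 3
      = ((K mod 3 + (N mod 3) * (((x*a - K mod 3)*(N mod 3)) mod 3)) * a) mod 3"
    unfolding j by (rule red3)
  also have "\<dots> = x"
  proof (rule mod3_small[OF assms(1,2)])
    show "K mod 3 \<in> {0,1,2}" by auto
    show "N mod 3 \<in> {1,2}" using assms(3) by auto
  qed
  finally show ?thesis .
qed
lemma C3_finite: "finite (carrier (C3_sdp n))" by (simp add: C3_carrier)

lemma gen_C3:
  assumes n: "even n" "n > 0" "\<not> 3 dvd n" and ab: "a \<in> {0..<3}" "b \<in> {0..<int n}"
  shows "generate (C3_sdp n) {(a,b)} =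
     (if even b then Aset a \<times> Bs n (nat (gcd b (int n))) else TB n a (nat (gcd b (int n))))"
proof -
  let ?G = "C3_sdp n"
  let ?N = "int n"
  have grp: "group ?G" using C3_group n by auto
  have gc: "(a,b) \<in> carrier ?G" using ab by (simp add: C3_carrier)
  have g1: "generate ?G {(a,b)} = {(a,b) [^]\<^bsub>?G\<^esub> k | k. k \<in> (UNIV :: nat set)}"
    using group.generate_pow_on_finite_carrier[OF grp C3_finite gc] .
  have Npos: "?N > 0" using n by simp
  have gg: "int (nat (gcd b ?N)) = gcd b ?N" by simp
  have BL: "Bs n (nat (gcd b ?N)) = {(int k * b) mod ?N | k::nat. True}"
    unfolding L1[OF Npos] Bs_def gg by simp
  have N3: "?N mod 3 \<noteq> 0" using n(3) by presburger
  show ?thesis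
  proof (cases "even b")
    case True
    have "{(a,b) [^]\<^bsub>?G\<^esub> k | k. k \<in> (UNIV :: nat set)} = {((int k * a) mod 3, (int k * b) mod ?N) | k::nat. True}"
      using C3_pow[OF n(1,2) ab] True by simp
    also have "\<dots> = Aset a \<times> Bs n (nat (gcd b ?N))"
    proof
      show "{((int k * a) mod 3, (int k * b) mod ?N) | k::nat. True} \<subseteq> Aset a \<times> Bs n (nat (gcd b ?N))"
        unfolding BL Aset_def by auto
    next
      show "Aset a \<times> Bs n (nat (gcd b ?N)) \<subseteq> {((int k * a) mod 3, (int k * b) mod ?N) | k::nat. True}"
      proof
        fix p assume "p \<in> Aset a \<times> Bs n (nat (gcd b ?N))"
        then obtain x y where p: "p = (x,y)" "x \<in> Aset a" "y \<in> Bs n (nat (gcd b ?N))" by auto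
        then obtain k1 :: nat where k1: "y = (int k1 * b) mod ?N" unfolding BL by auto
        show "p \<in> {((int k * a) mod 3, (int k * b) mod ?N) | k::nat. True}"
        proof (cases "a = 0")
          case True
          then have "x = 0" using p by (simp add: Aset_def)
          then show ?thesis unfolding p(1) k1 using True by (intro CollectI exI[of _ k1]) simp
        next
          case False
          then have a12: "a \<in> {1,2}" using ab by auto
          have x3: "x \<in> {0,1,2}" using p False by (auto simp: Aset_def)
          define j where "j = nat (((x*a - int k1)*?N) mod 3)"
          have ij: "int j = ((x*a - int k1)*?N) mod 3" by (simp add: j_def)
          define k where "k = k1 + n * j"
          have ik: "int k = int k1 + ?N * int j" by (simp add: k_def)
          have e1: "(int k * a) mod 3 = x" unfolding ik ij using mod3[OF a12 x3 N3] .
          have ee: "(int k1 + ?N * int j) * b = int k1 * b + (b * int j) * ?N" by (simp add: algebra_simps)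
          have e2: "(int k * b) mod ?N = y" unfolding ik k1 ee by (rule mod_mult_self1)
          show ?thesis unfolding p(1) by (intro CollectI exI[of _ k]) (simp add: e1 e2)
        qed
      qed
    qed
    finally show ?thesis using g1 True by simp
  next
    case False
    have eN: "even ?N" using n by simp
    have par: "\<And>k::nat. odd ((int k * b) mod ?N) = odd k"
      using even_mod_evenN[OF eN] False by simp
    have "{(a,b) [^]\<^bsub>?G\<^esub> k | k. k \<in> (UNIV :: nat set)} =
          {((if odd k then a else 0), (int k * b) mod ?N) | k::nat. True}"
      using C3_pow[OF n(1,2) ab] False by simp
    also have "\<dots> = (\<lambda>y. (if odd y then a else 0, y)) ` {(int k * b) mod ?N | k::nat. True}"
    proof -
      have "{((if odd k then a else 0), (int k * b) mod ?N) | k::nat. True} =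
            {(\<lambda>y. (if odd y then a else 0, y)) ((int k * b) mod ?N) | k::nat. True}"
        by (simp only: par)
      then show ?thesis by blast
    qed
    also have "\<dots> = TB n a (nat (gcd b ?N))" unfolding TB_def BL ..
    finally show ?thesis using g1 False by simp
  qed
qed
lemma Bs_zero: "n > 0 \<Longrightarrow> 0 \<in> Bs n d" by (simp add: Bs_def)

lemma Bs_self: "d dvd n \<Longrightarrow> d < n \<Longrightarrow> int d \<in> Bs n d" by (simp add: Bs_def)

lemma dvd_pos_le: "d dvd n \<Longrightarrow> (n::nat) > 0 \<Longrightarrow> 0 < d \<and> d \<le> n"
  by (meson dvd_imp_le dvd_pos_nat)

lemma Bs_inj: assumes "n > 0" "d1 dvd n" "d2 dvd n" "Bs n d1 = Bs n d2" shows "d1 = d2"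
proof -
  have p1: "0 < d1" "d1 \<le> n" and p2: "0 < d2" "d2 \<le> n" using dvd_pos_le assms by auto
  have s: "d2 dvd d1" if "d1 < n"
  proof -
    have "int d1 \<in> Bs n d2" using Bs_self[OF assms(2) that] assms(4) by simp
    then have "int d2 dvd int d1" by (simp add: Bs_def)
    then show ?thesis by simp
  qed
  have t: "d1 dvd d2" if "d2 < n"
  proof -
    have "int d2 \<in> Bs n d1" using Bs_self[OF assms(3) that] assms(4) by simp
    then have "int d1 dvd int d2" by (simp add: Bs_def)
    then show ?thesis by simp
  qed
  show ?thesis
  proof (cases "d1 < n")
    case True
    then have "d2 dvd d1" using s by simp
    then have "d2 < n" using dvd_imp_le[OF \<open>d2 dvd d1\<close> p1(1)] True by linarith
    then show ?thesis using t \<open>d2 dvd d1\<close> True dvd_antisym by blast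
  next
    case False
    then have d1n: "d1 = n" using p1 by simp
    show ?thesis
    proof (rule ccontr)
      assume "d1 \<noteq> d2"
      then have "d2 < n" using d1n p2 by simp
      then have "d1 dvd d2" using t by simp
      then show False using dvd_imp_le[OF \<open>d1 dvd d2\<close> p2(1)] d1n \<open>d2 < n\<close> by linarith
    qed
  qed
qed

lemma TB_snd: "snd ` TB n a d = Bs n d" unfolding TB_def by (simp add: image_image)

lemma TB_mem: "odd d \<Longrightarrow> d dvd n \<Longrightarrow> d < n \<Longrightarrow> (a, int d) \<in> TB n a d"
  unfolding TB_def using Bs_self by (auto intro!: image_eqI[of _ _ "int d"])

lemma odd_dvd_lt: "odd d \<Longrightarrow> d dvd n \<Longrightarrow> even n \<Longrightarrow> n > 0 \<Longrightarrow> d < (n::nat)"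
  using dvd_imp_le[of d n] by (cases "d = n") auto

lemma cyc_eq:
  assumes n: "even n" "n > 0" "\<not> 3 dvd n"
  shows "cyclic_subgroups (C3_sdp n) =
    (\<lambda>(A,d). A \<times> Bs n d) ` ({{0},{0..<3}} \<times> {d. d dvd n \<and> even d}) \<union>
    (\<lambda>(a,d). TB n a d) ` ({0..<3} \<times> {d. d dvd n \<and> odd d})"
  (is "_ = ?X \<union> ?Y")
proof
  show "cyclic_subgroups (C3_sdp n) \<subseteq> ?X \<union> ?Y"
  proof
    fix H assume "H \<in> cyclic_subgroups (C3_sdp n)"
    then obtain a b where ab: "a \<in> {0..<3}" "b \<in> {0..<int n}" and H: "H = generate (C3_sdp n) {(a,b)}"
      unfolding cyclic_subgroups_def C3_carrier by auto
    define d where "d = nat (gcd b (int n))"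
    have id: "int d = gcd b (int n)" by (simp add: d_def)
    have "int d dvd int n" unfolding id by simp
    then have ddvd: "d dvd n" by simp
    show "H \<in> ?X \<union> ?Y"
    proof (cases "even b")
      case True
      have "(2::int) dvd gcd b (int n)" using True n(1) by simp
      then have "even (int d)" unfolding id .
      then have "even d" by simp
      moreover have "Aset a \<in> {{0},{0..<3}}" by (simp add: Aset_def)
      ultimately have m: "(Aset a, d) \<in> {{0},{0..<3}} \<times> {d. d dvd n \<and> even d}" using ddvd by simp
      have e: "H = (\<lambda>(A,d). A \<times> Bs n d) (Aset a, d)"
        using H gen_C3[OF n ab] True by (simp add: d_def)
      show ?thesis by (rule UnI1, rule image_eqI[where f="\<lambda>(A,d). A \<times> Bs n d" and x="(Aset a, d)", OF e m])
    next
      case False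
      have "int d dvd b" using id by simp
      then have "odd d" using False dvd_trans[of 2 "int d" b] by auto
      then have m: "(a, d) \<in> {0..<3} \<times> {d. d dvd n \<and> odd d}" using ddvd ab by simp
      have e: "H = (\<lambda>(a,d). TB n a d) (a, d)"
        using H gen_C3[OF n ab] False by (simp add: d_def)
      show ?thesis by (rule UnI2, rule image_eqI[where f="\<lambda>(a,d). TB n a d" and x="(a, d)", OF e m])
    qed
  qed
next
  show "?X \<union> ?Y \<subseteq> cyclic_subgroups (C3_sdp n)"
  proof
    fix H assume "H \<in> ?X \<union> ?Y"
    then show "H \<in> cyclic_subgroups (C3_sdp n)"
    proof
      assume "H \<in> ?X"
      then obtain A d where A: "A \<in> {{0},{0..<3}}" and d: "d dvd n" "even d" and H: "H = A \<times> Bs n d" by auto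
      define a :: int where "a = (if A = {0} then 0 else 1)"
      define b where "b = int d mod int n"
      have ab: "a \<in> {0..<3}" "b \<in> {0..<int n}" using n by (auto simp: a_def b_def)
      have eb: "even b" using even_mod_evenN[of "int n" "int d"] n d by (simp add: b_def)
      have "gcd b (int n) = gcd (int d) (int n)" unfolding b_def using n by (simp add: gcd_mod_left)
      also have "\<dots> = int d" using d by (simp add: gcd_proj1_if_dvd_int)
      finally have g: "nat (gcd b (int n)) = d" by simp
      have "Aset a = A" using A by (auto simp: Aset_def a_def)
      then have "generate (C3_sdp n) {(a,b)} = H" using gen_C3[OF n ab] eb g H by simp
      moreover have "(a,b) \<in> carrier (C3_sdp n)" using ab by (simp add: C3_carrier)
      ultimately show ?thesis unfolding cyclic_subgroups_def by blast
    next
      assume "H \<in> ?Y"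
      then obtain a d where a: "a \<in> {0..<3}" and d: "d dvd n" "odd d" and H: "H = TB n a d" by auto
      define b where "b = int d"
      have dl: "d < n" using odd_dvd_lt[OF d(2,1) n(1,2)] .
      have ab: "a \<in> {0..<3}" "b \<in> {0..<int n}" using a dl by (auto simp: b_def)
      have eb: "odd b" using d by (simp add: b_def)
      have "gcd b (int n) = int d" using d by (simp add: b_def gcd_proj1_if_dvd_int)
      then have g: "nat (gcd b (int n)) = d" by simp
      have "generate (C3_sdp n) {(a,b)} = H" using gen_C3[OF n ab] eb g H by simp
      moreover have "(a,b) \<in> carrier (C3_sdp n)" using ab by (simp add: C3_carrier)
      ultimately show ?thesis unfolding cyclic_subgroups_def by blast
    qed
  qed
qed
lemma fin_divs: "(n::nat) > 0 \<Longrightarrow> finite {d. d dvd n \<and> P d}"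
  by (rule finite_subset[of _ "{..n}"]) (auto dest: dvd_imp_le)

lemma card_cyc:
  assumes n: "even n" "n > 0" "\<not> 3 dvd n"
  shows "card (cyclic_subgroups (C3_sdp n)) = 2 * card {d. d dvd n \<and> even d} + 3 * card {d. d dvd n \<and> odd d}"
proof -
  let ?De = "{d. d dvd n \<and> even d}" and ?Do = "{d. d dvd n \<and> odd d}"
  let ?f = "\<lambda>(A::int set,d). A \<times> Bs n d" and ?g = "\<lambda>(a,d). TB n a d"
  let ?X = "?f ` ({{0},{0..<3::int}} \<times> ?De)" and ?Y = "?g ` ({0..<3::int} \<times> ?Do)"
  have fe: "finite ?De" and fo: "finite ?Do" using fin_divs n by auto
  have injf: "inj_on ?f ({{0},{0..<3::int}} \<times> ?De)"
  proof (rule inj_onI)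
    fix p q assume p: "p \<in> {{0},{0..<3::int}} \<times> ?De" and q: "q \<in> {{0},{0..<3::int}} \<times> ?De" and e: "?f p = ?f q"
    obtain A1 d1 where p': "p = (A1,d1)" by (cases p)
    obtain A2 d2 where q': "q = (A2,d2)" by (cases q)
    have ne: "A1 \<noteq> {}" "A2 \<noteq> {}" "Bs n d1 \<noteq> {}" "Bs n d2 \<noteq> {}" using p q p' q' Bs_zero[OF n(2)] by auto
    have e': "A1 \<times> Bs n d1 = A2 \<times> Bs n d2" using e p' q' by simp
    have aa: "A1 = A2" using arg_cong[OF e', of "image fst"] ne by simp
    have "Bs n d1 = Bs n d2" using arg_cong[OF e', of "image snd"] ne by simp
    then have "d1 = d2" using Bs_inj[OF n(2)] p q p' q' by auto
    then show "p = q" using p' q' aa by simp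
  qed
  have injg: "inj_on ?g ({0..<3::int} \<times> ?Do)"
  proof (rule inj_onI)
    fix p q assume p: "p \<in> {0..<3::int} \<times> ?Do" and q: "q \<in> {0..<3::int} \<times> ?Do" and e: "?g p = ?g q"
    obtain a1 d1 where p': "p = (a1,d1)" by (cases p)
    obtain a2 d2 where q': "q = (a2,d2)" by (cases q)
    have e': "TB n a1 d1 = TB n a2 d2" using e p' q' by simp
    have "Bs n d1 = Bs n d2" using arg_cong[OF e', of "image snd"] by (simp add: TB_snd)
    then have dd: "d1 = d2" using Bs_inj[OF n(2)] p q p' q' by auto
    have d1: "odd d1" "d1 dvd n" using p p' by auto
    have "(a1, int d1) \<in> TB n a2 d2" using TB_mem[OF d1 odd_dvd_lt[OF d1 n(1,2)], of a1] e' by simp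
    then have "a1 = a2" using d1 unfolding TB_def by auto
    then show "p = q" using p' q' dd by simp
  qed
  have disj: "?X \<inter> ?Y = {}"
  proof (rule ccontr)
    assume "?X \<inter> ?Y \<noteq> {}"
    then obtain A d1 a d2 where d1: "d1 dvd n" "even d1" and d2: "d2 dvd n" "odd d2"
      and e: "A \<times> Bs n d1 = TB n a d2" by auto
    have "(a, int d2) \<in> A \<times> Bs n d1" using TB_mem[OF d2(2,1) odd_dvd_lt[OF d2(2,1) n(1,2)], of a] e by simp
    then have "int d1 dvd int d2" by (simp add: Bs_def)
    then have "d1 dvd d2" by simp
    then show False using d1(2) d2(2) dvd_trans[of 2 d1 d2] by simp
  qed
  have ne: "{0::int} \<noteq> {0..<3}"
  proof
    assume "{0::int} = {0..<3}"
    then have "(1::int) \<in> {0}" by simp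
    then show False by simp
  qed
  have c2: "card {{0},{0..<3::int}} = 2" using ne by simp
  have "card (cyclic_subgroups (C3_sdp n)) = card (?X \<union> ?Y)" using cyc_eq[OF n] by simp
  also have "\<dots> = card ?X + card ?Y" using disj fe fo by (intro card_Un_disjoint) auto
  also have "card ?X = 2 * card ?De" using card_image[OF injf] c2 by (simp add: card_cartesian_product)
  also have "card ?Y = 3 * card ?Do" using card_image[OF injg] by (simp add: card_cartesian_product)
  finally show ?thesis .
qed
lemma order_C3: "order (C3_sdp n) = 3 * n"
  by (simp add: order_def C3_carrier card_cartesian_product)

lemma divs_split: "(n::nat) > 0 \<Longrightarrow> card {m. 0 < m \<and> m dvd n} = card {d. d dvd n \<and> even d} + card {d. d dvd n \<and> odd d}"
proof -
  assume n: "n > 0"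
  have "{m. 0 < m \<and> m dvd n} = {d. d dvd n \<and> even d} \<union> {d. d dvd n \<and> odd d}"
    using n by (auto intro: dvd_pos_nat)
  moreover have "finite {d. d dvd n \<and> even d}" "finite {d. d dvd n \<and> odd d}" using fin_divs n by auto
  ultimately show ?thesis by (simp add: card_Un_disjoint disjoint_iff)
qed

lemma divs3: assumes n: "(n::nat) > 0" "\<not> 3 dvd n"
  shows "num_divisors (3 * n) = 2 * card {m. 0 < m \<and> m dvd n}"
proof -
  let ?D = "{m. 0 < m \<and> m dvd n}"
  have eq: "{m. 0 < m \<and> m dvd 3 * n} = ?D \<union> (\<lambda>x. 3 * x) ` ?D"
  proof (rule equalityI; rule subsetI)
    fix m assume m: "m \<in> {m. 0 < m \<and> m dvd 3 * n}"
    show "m \<in> ?D \<union> (\<lambda>x. 3 * x) ` ?D"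
    proof (cases "3 dvd m")
      case True
      then obtain m' where m': "m = 3 * m'" by blast
      then have "m' dvd n" "0 < m'" using m by auto
      then show ?thesis using m' by auto
    next
      case False
      have p3: "normalization_semidom_class.prime (3::nat)" by simp
      have "coprime 3 m" using prime_imp_coprime[OF p3 False] .
      then have "coprime m 3" by (simp add: coprime_commute)
      then have "m dvd n" using m coprime_dvd_mult_right_iff by auto
      then show ?thesis using m by auto
    qed
  next
    fix m assume "m \<in> ?D \<union> (\<lambda>x. 3 * x) ` ?D"
    then consider "m \<in> ?D" | x where "x \<in> ?D" "m = 3 * x" by blast
    then show "m \<in> {m. 0 < m \<and> m dvd 3 * n}"
    proof cases
      case 1 then show ?thesis using dvd_mult[of m n 3] by simp
    next
      case 2 then show ?thesis using mult_dvd_mono[of 3 3 x n] by simp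
    qed
  qed
  have "?D \<subseteq> {..n}" using dvd_imp_le[OF _ n(1)] by auto
  then have fD: "finite ?D" using finite_subset by blast
  have disj: "?D \<inter> (\<lambda>x. 3 * x) ` ?D = {}"
  proof (rule ccontr)
    assume "?D \<inter> (\<lambda>x. 3 * x) ` ?D \<noteq> {}"
    then obtain x where "3 * x dvd n" by auto
    then have "3 dvd n" using dvd_mult_left by blast
    then show False using n by simp
  qed
  have inj: "inj_on (\<lambda>x::nat. 3 * x) ?D" by (rule inj_onI) simp
  have "num_divisors (3 * n) = card (?D \<union> (\<lambda>x. 3 * x) ` ?D)" unfolding num_divisors_def eq ..
  also have "\<dots> = card ?D + card ((\<lambda>x. 3 * x) ` ?D)" using fD disj by (intro card_Un_disjoint) auto
  also have "card ((\<lambda>x. 3 * x) ` ?D) = card ?D" using card_image[OF inj] .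
  finally show ?thesis by simp
qed

lemma odd_divs: "u \<ge> 1 \<Longrightarrow> card {d. d dvd (2 ^ u * 5 ^ k :: nat) \<and> odd d} = k + 1"
proof -
  assume u: "u \<ge> 1"
  have "{d. d dvd (2 ^ u * 5 ^ k :: nat) \<and> odd d} = (\<lambda>i. 5 ^ i) ` {..k}"
  proof (rule equalityI; rule subsetI)
    fix d assume d: "d \<in> {d. d dvd (2 ^ u * 5 ^ k :: nat) \<and> odd d}"
    then have cp: "coprime d (2 ^ u)" by (simp add: coprime_power_right_iff)
    then have "d dvd 5 ^ k" using d coprime_dvd_mult_right_iff[OF cp] by simp
    then obtain i where "i \<le> k" "d = 5 ^ i" using divides_primepow_nat[of "5::nat"] by auto
    then show "d \<in> (\<lambda>i. 5 ^ i) ` {..k}" by auto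
  next
    fix d assume "d \<in> (\<lambda>i. 5 ^ i :: nat) ` {..k}"
    then obtain i where i: "i \<le> k" "d = 5 ^ i" by auto
    then have "d dvd 5 ^ k" by (simp add: le_imp_power_dvd)
    then show "d \<in> {d. d dvd (2 ^ u * 5 ^ k :: nat) \<and> odd d}" using i by auto
  qed
  moreover have "inj_on (\<lambda>i. 5 ^ i :: nat) {..k}" by (rule inj_onI) simp
  ultimately show ?thesis by (simp add: card_image)
qed

lemma not3: "\<not> 3 dvd (2 ^ u * 5 ^ k :: nat)"
proof
  assume "3 dvd (2 ^ u * 5 ^ k :: nat)"
  moreover have p3: "normalization_semidom_class.prime (3::nat)" by simp
  ultimately have "3 dvd (2::nat) ^ u \<or> 3 dvd (5::nat) ^ k" using prime_dvd_mult_iff by blast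
  then have "3 dvd (2::nat) \<or> 3 dvd (5::nat)" using prime_dvd_power[OF p3] by blast
  then show False by simp
qed
lemma main_u:
  assumes u: "u \<ge> 1"
  shows "group (C3_sdp (2 ^ u * 5 ^ k)) \<and>
    card (cyclic_subgroups (C3_sdp (2 ^ u * 5 ^ k))) = num_divisors (order (C3_sdp (2 ^ u * 5 ^ k))) + (k + 1)"
proof -
  let ?n = "2 ^ u * 5 ^ k :: nat"
  have ev: "even ?n" using u by (simp add: dvd_mult2)
  have pos: "?n > 0" by simp
  have n3: "\<not> 3 dvd ?n" by (rule not3)
  have "card (cyclic_subgroups (C3_sdp ?n)) = 2 * card {d. d dvd ?n \<and> even d} + 3 * card {d. d dvd ?n \<and> odd d}"
    by (rule card_cyc[OF ev pos n3])
  moreover have "num_divisors (order (C3_sdp ?n)) = 2 * (card {d. d dvd ?n \<and> even d} + card {d. d dvd ?n \<and> odd d})"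
    unfolding order_C3 divs3[OF pos n3] divs_split[OF pos] ..
  moreover have "card {d. d dvd ?n \<and> odd d} = k + 1" by (rule odd_divs[OF u])
  ultimately show ?thesis using C3_group[OF ev pos] by simp
qed

theorem mainTheorem15:
  fixes \<gamma> :: nat
  assumes "\<gamma> \<ge> 1"
  shows "(\<exists>F :: nat \<Rightarrow> (int \<times> int) monoid.
            (\<forall>i. group (F i) \<and> finite (carrier (F i)) \<and>
                 card (cyclic_subgroups (F i)) = num_divisors (order (F i)) + \<gamma>) \<and>
            (\<forall>i j. i \<noteq> j \<longrightarrow> \<not> (F i \<cong> F j)))
       \<and> (\<forall>u::nat. u \<ge> 1 \<longrightarrow>
            (let G = C3_sdp (2 ^ u * 5 ^ (\<gamma> - 1)) in
               group G \<and> card (cyclic_subgroups G) = num_divisors (order G) + \<gamma>))"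
proof -
  have g: "\<gamma> - 1 + 1 = \<gamma>" using assms by simp
  have part2: "\<forall>u::nat. u \<ge> 1 \<longrightarrow>
            (let G = C3_sdp (2 ^ u * 5 ^ (\<gamma> - 1)) in
               group G \<and> card (cyclic_subgroups G) = num_divisors (order G) + \<gamma>)"
    using main_u[of _ "\<gamma> - 1"] g by (simp add: Let_def)
  define F where "F = (\<lambda>i::nat. C3_sdp (2 ^ Suc i * 5 ^ (\<gamma> - 1)))"
  have "\<forall>i. group (F i) \<and> finite (carrier (F i)) \<and>
                 card (cyclic_subgroups (F i)) = num_divisors (order (F i)) + \<gamma>"
  proof
    fix i
    have "Suc i \<ge> 1" by simp
    then show "group (F i) \<and> finite (carrier (F i)) \<and>
                 card (cyclic_subgroups (F i)) = num_divisors (order (F i)) + \<gamma>"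
      using part2 C3_finite unfolding F_def Let_def by blast
  qed
  moreover have "\<forall>i j. i \<noteq> j \<longrightarrow> \<not> (F i \<cong> F j)"
  proof (intro allI impI notI)
    fix i j assume ij: "i \<noteq> j" and iso: "F i \<cong> F j"
    have "card (carrier (F i)) = card (carrier (F j))" by (rule iso_same_card[OF iso])
    then have "3 * (2 ^ Suc i * 5 ^ (\<gamma> - 1)) = 3 * (2 ^ Suc j * 5 ^ (\<gamma> - 1) :: nat)"
      using order_C3 unfolding order_def F_def by metis
    then have "(2::nat) ^ Suc i = 2 ^ Suc j" by simp
    then have "Suc i = Suc j" using power_inject_exp[of "2::nat"] by simp
    then show False using ij by simp
  qed
  ultimately show ?thesis using part2 by blast
qed

end
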